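(* For every integer $n\ge 2$, \[ \left\lfloor\frac{n+2\left\lfloor\frac{n-3}{7}\right\rfloor}{3}\right\rfloor\le S_d(n)\le \left\lfloor\frac{n}{2}\right\rfloor . \]
   Context: A word is a finite word over the two-letter alphabet $\{a,b\}$; words are written multiplicatively (e.g. $b^{3}(ab)^2$), and $l(w)$ denotes the length of $w$. A word $w=a_1\cdots a_n$ is a palindrome if $a_i=a_{n-i+1}$ for all $i\le n$, and an antipalindrome if $a_i\neq a_{n-i+1}$ for all $i\le n$. For a word $w$, $S_d(w)$ is the minimal number of letters of $w$ whose deletion from $w$ yields a palindrome or an antipalindrome. For a positive integer $n$, $S_d(n)=\max\{S_d(w): w \text{ a word with } l(w)=n\}$. Here $\lfloor x\rfloor$ denotes the integer part (floor) of $x$. *)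

theory Defs
  imports Complex_Main "HOL-Library.Sublist"
begin

(* Words over the two-letter alphabet {a,b}, encoded as bool lists (a = True, b = False). *)
type_synonym word = "bool list"

definition is_palindrome :: "word \<Rightarrow> bool" where
  "is_palindrome w \<longleftrightarrow> (\<forall>i<length w. w ! i = w ! (length w - 1 - i))"

definition is_antipalindrome :: "word \<Rightarrow> bool" where
  "is_antipalindrome w \<longleftrightarrow> (\<forall>i<length w. w ! i \<noteq> w ! (length w - 1 - i))"

(* Deleting k letters of w yields a word v: v is a subsequence of w of length l(w) - k. *)
definition Sd_word :: "word \<Rightarrow> nat" where
  "Sd_word w = (LEAST k. \<exists>v. subseq v w \<and> length v + k = length w \<and>
                          (is_palindrome v \<or> is_antipalindrome v))"

definition Sd :: "nat \<Rightarrow> nat" where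
  "Sd n = Max (Sd_word ` {w :: word. length w = n})"

end

theory Submission
  imports Defs
begin

definition cnt :: "bool \<Rightarrow> bool list \<Rightarrow> nat" where
  "cnt e xs = length (filter (\<lambda>z. z = e) xs)"

lemma cnt_simps[simp]:
  "cnt e [] = 0"
  "cnt e (x # xs) = (if x = e then Suc (cnt e xs) else cnt e xs)"
  "cnt e (xs @ ys) = cnt e xs + cnt e ys"
  "cnt e (replicate n d) = (if d = e then n else 0)"
  by (auto simp: cnt_def)

lemma cnt_mono: "subseq v w \<Longrightarrow> cnt e v \<le> cnt e w"
  unfolding cnt_def by (rule list_emb_length, rule subseq_filter)

lemma cnt_sum: "length xs = cnt True xs + cnt False xs"
  by (induct xs) auto

definition AB :: "nat \<Rightarrow> bool list" where
  "AB k = concat (replicate k [True, False])"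

lemma AB_simps[simp]: "AB 0 = []" "AB (Suc k) = True # False # AB k"
  by (auto simp: AB_def)

lemma cnt_AB[simp]: "cnt e (AB k) = k"
  by (induct k) auto

lemma subseq_repF_count: "subseq (replicate s e) w \<Longrightarrow> s \<le> cnt e w"
  using cnt_mono[of "replicate s e" w e] by simp

lemma PR:
  "q \<noteq> [] \<Longrightarrow> last q = True \<Longrightarrow> subseq (q @ replicate s False) (AB k @ replicate z False) \<Longrightarrow>
   length q + 2*s \<le> 2*k+2*z+1 \<and> cnt True q + s \<le> k+z+1"
proof (induction k arbitrary: q s)
  case 0
  have "True \<in> set (q @ replicate s False)" using 0(1,2)
    by (cases q rule: rev_cases) auto
  then obtain y where "y \<in> set (replicate z False)" "True = y"
    using 0(3) by (auto elim: list_emb_set)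
  then show ?case by simp
next
  case (Suc k)
  let ?W = "AB k @ replicate z False"
  have B: "length q' + 2*s \<le> 2*k+2*z+2 \<and> cnt True q' + s \<le> k+z+1"
    if "q' \<noteq> []" "last q' = True" "subseq (q' @ replicate s False) (False # ?W)" for q'
  proof (cases q')
    case Nil then show ?thesis using that by simp
  next
    case (Cons c q'')
    show ?thesis
    proof (cases c)
      case True
      then have "subseq (q' @ replicate s False) ?W" using that Cons by simp
      from Suc.IH[OF that(1,2) this] show ?thesis by simp
    next
      case False
      then have q'': "q'' \<noteq> []" "last q'' = True" using that Cons by (auto split: if_splits)
      have "subseq (q'' @ replicate s False) ?W" using that Cons False by simp
      from Suc.IH[OF q'' this] show ?thesis using Cons False by simp
    qed
  qed
  show ?case
  proof (cases q)
    case Nil then show ?thesis using Suc by simp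
  next
    case (Cons c q')
    show ?thesis
    proof (cases c)
      case False
      then have "subseq (q @ replicate s False) (False # ?W)" using Suc.prems Cons by simp
      then show ?thesis using B[OF Suc.prems(1,2)] by simp
    next
      case True
      then have sq: "subseq (q' @ replicate s False) (False # ?W)" using Suc.prems Cons by simp
      show ?thesis
      proof (cases "q' = []")
        case True
        then have "subseq (replicate s False) (False # ?W)" using sq by simp
        then have "s \<le> cnt False (False # ?W)" by (rule subseq_repF_count)
        then show ?thesis using True Cons \<open>c\<close> by simp
      next
        case False
        then have "last q' = True" using Suc.prems Cons by simp
        then show ?thesis using B[OF False _ sq] Cons \<open>c\<close> by simp
      qed
    qed
  qed
qed

lemma cnt_zero: "cnt e xs = 0 \<longleftrightarrow> e \<notin> set xs"
  by (induct xs) auto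

lemma cnt_rev[simp]: "cnt e (rev xs) = cnt e xs"
  unfolding cnt_def by (simp add: rev_filter[symmetric])

lemma cnt_map_Not[simp]: "cnt e (map Not xs) = cnt (\<not> e) xs"
  by (induct xs) auto

lemma subseq_rep_all: "subseq v (replicate n e) \<Longrightarrow> v = replicate (length v) e"
proof -
  assume a: "subseq v (replicate n e)"
  have "\<forall>z\<in>set v. z = e"
  proof
    fix z assume "z \<in> set v"
    then obtain y where "y \<in> set (replicate n e)" "z = y" using a by (auto elim: list_emb_set)
    then show "z = e" by (simp split: if_splits)
  qed
  then show ?thesis by (simp add: replicate_length_same)
qed

lemma subseq_rep_ex: "subseq v (replicate n e) \<Longrightarrow> \<exists>j. j \<le> n \<and> v = replicate j e"
proof -
  assume a: "subseq v (replicate n e)"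
  have "v = replicate (length v) e" using a by (rule subseq_rep_all)
  moreover have "length v \<le> n" using list_emb_length[OF a] by simp
  ultimately show ?thesis by blast
qed

lemma strip_tail:
  assumes "v \<noteq> []" "last v = True" "subseq v (X @ replicate z False)"
  shows "subseq v X"
proof -
  obtain v1 v2 where v: "v = v1 @ v2" "subseq v1 X" "subseq v2 (replicate z False)"
    using assms(3) by (auto elim: subseq_appendE)
  obtain j where v2: "v2 = replicate j False" using subseq_rep_ex[OF v(3)] by blast
  have "v2 = []"
  proof (rule ccontr)
    assume "v2 \<noteq> []"
    then have "last v = last v2" using v(1) by simp
    also have "\<dots> = False" using \<open>v2 \<noteq> []\<close> v2 by (cases j) auto
    finally show False using assms(2) by simp
  qed
  then show ?thesis using v by simp
qed

lemma Q_aux: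
  "p \<ge> 1 \<Longrightarrow> (c = [] \<or> last c = False) \<Longrightarrow> subseq (c @ replicate p True) (AB k) \<Longrightarrow>
   length c + 2*p \<le> 2*k"
proof (induction k arbitrary: c p)
  case 0
  then show ?case by (cases p) auto
next
  case (Suc k)
  have B: "length c' + 2*p \<le> 2*k+1"
    if "c' = [] \<or> last c' = False" "subseq (c' @ replicate p True) (False # AB k)" for c'
  proof (cases c')
    case Nil
    then obtain p' where "p = Suc p'" using Suc.prems(1) by (cases p) auto
    then have "subseq (c' @ replicate p True) (AB k)" using that Nil by simp
    from Suc.IH[OF Suc.prems(1) that(1) this] show ?thesis by simp
  next
    case (Cons d c'')
    show ?thesis
    proof (cases d)
      case True
      then have "subseq (c' @ replicate p True) (AB k)" using that Cons by simp
      from Suc.IH[OF Suc.prems(1) that(1) this] show ?thesis by simp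
    next
      case False
      then have "subseq (c'' @ replicate p True) (AB k)" using that Cons by simp
      moreover have "c'' = [] \<or> last c'' = False" using that Cons by (auto split: if_splits)
      ultimately have "length c'' + 2*p \<le> 2*k" using Suc.IH[OF Suc.prems(1)] by blast
      then show ?thesis using Cons by simp
    qed
  qed
  show ?case
  proof (cases c)
    case Nil
    then obtain p' where p: "p = Suc p'" using Suc.prems(1) by (cases p) auto
    then have "subseq (replicate p' True) (False # AB k)" using Suc.prems Nil by simp
    then have "p' \<le> cnt True (False # AB k)" by (rule subseq_repF_count)
    then show ?thesis using Nil p by simp
  next
    case (Cons d c')
    show ?thesis
    proof (cases d)
      case False
      then have "subseq (c @ replicate p True) (False # AB k)" using Suc.prems Cons by simp
      then show ?thesis using B[OF Suc.prems(2)] by simp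
    next
      case True
      then have "subseq (c' @ replicate p True) (False # AB k)" using Suc.prems Cons by simp
      moreover have "c' = [] \<or> last c' = False" using Suc.prems(2) Cons by (auto split: if_splits)
      ultimately have "length c' + 2*p \<le> 2*k+1" using B by blast
      then show ?thesis using Cons by simp
    qed
  qed
qed

lemma Q:
  assumes "p \<ge> 1" "c = [] \<or> last c = False" "subseq (c @ replicate p True) (AB k @ replicate z False)"
  shows "length c + 2*p \<le> 2*k"
proof -
  have "subseq (c @ replicate p True) (AB k)"
    by (rule strip_tail[OF _ _ assms(3)]) (use assms(1) in \<open>auto simp: last_append\<close>)
  then show ?thesis using Q_aux assms(1,2) by blast
qed

lemma pal_iff: "is_palindrome v \<longleftrightarrow> rev v = v"
proof
  assume a: "is_palindrome v"
  show "rev v = v"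
  proof (rule nth_equalityI)
    fix i assume i: "i < length (rev v)"
    have j: "length v - Suc i < length v" using i by simp
    have "rev v ! i = v ! (length v - Suc i)" using i by (simp add: rev_nth)
    also have "\<dots> = v ! (length v - 1 - (length v - Suc i))"
      using a j unfolding is_palindrome_def by blast
    also have "length v - 1 - (length v - Suc i) = i" using i by simp
    finally show "rev v ! i = v ! i" .
  qed simp
next
  assume a: "rev v = v"
  show "is_palindrome v" unfolding is_palindrome_def
  proof (intro allI impI)
    fix i assume i: "i < length v"
    have "v ! i = rev v ! i" using a by simp
    also have "\<dots> = v ! (length v - Suc i)" using i by (simp add: rev_nth)
    finally show "v ! i = v ! (length v - 1 - i)" by simp
  qed
qed

lemma antipal_iff: "is_antipalindrome v \<longleftrightarrow> map Not (rev v) = v"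
proof
  assume a: "is_antipalindrome v"
  show "map Not (rev v) = v"
  proof (rule nth_equalityI)
    fix i assume i: "i < length (map Not (rev v))"
    have j: "length v - Suc i < length v" using i by simp
    have "map Not (rev v) ! i = (\<not> v ! (length v - Suc i))" using i by (simp add: rev_nth)
    moreover have "v ! (length v - Suc i) \<noteq> v ! (length v - 1 - (length v - Suc i))"
      using a j unfolding is_antipalindrome_def by blast
    moreover have "length v - 1 - (length v - Suc i) = i" using i by simp
    ultimately show "map Not (rev v) ! i = v ! i" by simp
  qed simp
next
  assume a: "map Not (rev v) = v"
  show "is_antipalindrome v" unfolding is_antipalindrome_def
  proof (intro allI impI)
    fix i assume i: "i < length v"
    have "v ! i = map Not (rev v) ! i" using a by simp
    also have "\<dots> = (\<not> v ! (length v - Suc i))" using i by (simp add: rev_nth)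
    finally show "v ! i \<noteq> v ! (length v - 1 - i)" by simp
  qed
qed

lemma length_AB[simp]: "length (AB k) = 2*k"
  by (induct k) auto

lemma DEC:
  assumes pal: "rev v = v" and ine: "(\<not> e) \<in> set v"
  shows "\<exists>s c. v = replicate s e @ c @ replicate s e \<and> c \<noteq> [] \<and> hd c = (\<not> e) \<and> last c = (\<not> e)"
proof -
  define s where "s = length (takeWhile (\<lambda>z. z = e) v)"
  define c0 where "c0 = dropWhile (\<lambda>z. z = e) v"
  have "\<forall>y\<in>set (takeWhile (\<lambda>z. z = e) v). y = e" by (auto dest: set_takeWhileD)
  then have tw: "takeWhile (\<lambda>z. z = e) v = replicate s e"
    unfolding s_def by (simp add: replicate_length_same)
  have v: "v = replicate s e @ c0" using takeWhile_dropWhile_id[of "\<lambda>z. z = e" v] tw c0_def by simp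
  have c0ne: "c0 \<noteq> []"
  proof
    assume "c0 = []"
    then have "v = replicate s e" using v by simp
    then show False using ine by (cases s) auto
  qed
  have hc0: "hd c0 = (\<not> e)" using hd_dropWhile[of "\<lambda>z. z = e" v] c0ne unfolding c0_def by auto
  have eq: "rev c0 @ replicate s e = replicate s e @ c0"
    using pal v by simp
  have sle: "s \<le> length c0"
  proof (rule ccontr)
    assume a: "\<not> s \<le> length c0"
    have "take s (rev c0 @ replicate s e) = rev c0 @ replicate (s - length c0) e" using a by simp
    moreover have "take s (replicate s e @ c0) = replicate s e" by simp
    ultimately have "rev c0 @ replicate (s - length c0) e = replicate s e" using eq by simp
    then have "set (rev c0) \<subseteq> {e}"
    proof -
      assume H: "rev c0 @ replicate (s - length c0) e = replicate s e"
      have "set (rev c0) \<subseteq> set (rev c0 @ replicate (s - length c0) e)" by simp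
      also have "\<dots> = set (replicate s e)" using H by simp
      also have "\<dots> \<subseteq> {e}" by auto
      finally show ?thesis .
    qed
    moreover have "hd c0 \<in> set (rev c0)" using c0ne by simp
    ultimately show False using hc0 by auto
  qed
  define c where "c = take (length c0 - s) c0"
  have "drop (length c0) (rev c0 @ replicate s e) = replicate s e" by simp
  moreover have "drop (length c0) (replicate s e @ c0) = drop (length c0 - s) c0" using sle by simp
  ultimately have dr: "drop (length c0 - s) c0 = replicate s e" using eq by simp
  have "c0 = take (length c0 - s) c0 @ drop (length c0 - s) c0" by (rule append_take_drop_id[symmetric])
  also have "\<dots> = c @ replicate s e" by (simp only: c_def dr)
  finally have c0c: "c0 = c @ replicate s e" .
  have cne: "c \<noteq> []"
  proof
    assume "c = []"
    then have "c0 = replicate s e" using c0c by simp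
    then show False using c0ne hc0 by (cases s) auto
  qed
  have hc: "hd c = (\<not> e)" using hc0 c0c cne by simp
  have "rev c0 = replicate s e @ c" using eq c0c by simp
  then have "rev c = c" using c0c by simp
  then have "last c = hd c" using hd_rev[of c] by simp
  then show ?thesis using v c0c cne hc by auto
qed

lemma rep_split:
  "replicate j False @ v3 = c @ replicate p True \<Longrightarrow> p \<ge> 1 \<Longrightarrow>
   \<exists>c'. c = replicate j False @ c' \<and> v3 = c' @ replicate p True"
proof (induction j arbitrary: c)
  case 0 then show ?case by simp
next
  case (Suc j)
  show ?case
  proof (cases c)
    case Nil
    then show ?thesis using Suc.prems by (cases p) auto
  next
    case (Cons d c1)
    then have "d = False" "replicate j False @ v3 = c1 @ replicate p True" using Suc.prems by auto
    then show ?thesis using Suc.IH[of c1] Suc.prems(2) Cons by auto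
  qed
qed

lemma rep_prefix2:
  "replicate i e @ X = replicate p e @ d # t \<Longrightarrow> d \<noteq> e \<Longrightarrow> X = replicate (p - i) e @ d # t"
proof (induction i arbitrary: p)
  case 0 then show ?case by simp
next
  case (Suc i)
  then show ?case by (cases p) auto
qed

lemma skip_rep: "subseq (d # t) (replicate x e @ W) \<Longrightarrow> d \<noteq> e \<Longrightarrow> subseq (d # t) W"
  by (induct x) auto

lemma LASTT: "True \<in> set q \<Longrightarrow> \<exists>q'' r. q = q'' @ replicate r False \<and> q'' \<noteq> [] \<and> last q'' = True"
proof (induction q rule: rev_induct)
  case Nil then show ?case by simp
next
  case (snoc a q0)
  show ?case
  proof (cases a)
    case True
    then show ?thesis by (intro exI[of _ "q0 @ [a]"] exI[of _ 0]) auto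
  next
    case False
    then have "True \<in> set q0" using snoc.prems by auto
    then obtain q'' r where "q0 = q'' @ replicate r False" "q'' \<noteq> []" "last q'' = True"
      using snoc.IH by blast
    then show ?thesis using False
      by (intro exI[of _ q''] exI[of _ "Suc r"]) (simp add: replicate_append_same[symmetric])
  qed
qed

lemma L1:
  assumes pal: "rev v = v"
    and sub: "subseq v (replicate x True @ replicate y False @ AB k @ replicate k False)"
    and y: "2*k+1 \<le> y" and xy: "x \<le> y + k"
  shows "length v \<le> y + 2*k"
proof (cases "True \<in> set v \<and> False \<in> set v")
  case False
  have "length v = cnt True v + cnt False v" by (rule cnt_sum)
  moreover have "cnt True v \<le> x + k" using cnt_mono[OF sub, of True] by simp
  moreover have "cnt False v \<le> y + 2*k" using cnt_mono[OF sub, of False] by simp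
  ultimately show ?thesis using False xy cnt_zero[of True v] cnt_zero[of False v] by auto
next
  case True
  then have vne: "v \<noteq> []" by auto
  show ?thesis
  proof (cases "hd v")
    case False
    obtain s c where vd: "v = replicate s False @ c @ replicate s False" "c \<noteq> []" "hd c = True" "last c = True"
      using DEC[OF pal, of False] True by auto
    have s0: "s \<noteq> 0" using vd False by (cases s) auto
    then obtain t where vt: "v = False # t" using vd by (cases s) auto
    have sub2: "subseq v (replicate y False @ AB k @ replicate k False)"
      using skip_rep[of False t x True "replicate y False @ AB k @ replicate k False"] sub vt by simp
    obtain v2 v3 where vv: "v = v2 @ v3" "subseq v2 (replicate y False)" "subseq v3 (AB k @ replicate k False)"
      using sub2 by (auto elim: subseq_appendE)
    obtain j where v2: "v2 = replicate j False" using subseq_rep_ex[OF vv(2)] by blast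
    obtain ct where c: "c = True # ct" using vd(2,3) by (cases c) auto
    have "v2 @ v3 = replicate s False @ c @ replicate s False" using vv(1) vd(1) by auto
    then have "replicate j False @ v3 = replicate s False @ True # (ct @ replicate s False)"
      using v2 c by simp
    then have "v3 = replicate (s - j) False @ True # (ct @ replicate s False)"
      by (rule rep_prefix2) simp
    then have "subseq (c @ replicate s False) v3" using c by (simp add: subseq_drop_many)
    then have "subseq (c @ replicate s False) (AB k @ replicate k False)"
      using vv(3) by (rule subseq_order.order_trans)
    then have "length c + 2*s \<le> 2*k+2*k+1" using PR[OF vd(2,4)] by blast
    then show ?thesis using vd(1) y by simp
  next
    case hT: True
    obtain p c where vd: "v = replicate p True @ c @ replicate p True" "c \<noteq> []" "hd c = False" "last c = False"
      using DEC[OF pal, of True] True by auto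
    have p0: "p \<ge> 1" using vd hT by (cases p) auto
    obtain v1 X where vX: "v = v1 @ X" "subseq v1 (replicate x True)"
      "subseq X (replicate y False @ AB k @ replicate k False)"
      using sub by (auto elim: subseq_appendE)
    obtain v2 v3 where vv: "X = v2 @ v3" "subseq v2 (replicate y False)" "subseq v3 (AB k @ replicate k False)"
      using vX(3) by (auto elim: subseq_appendE)
    obtain i where v1: "v1 = replicate i True" using subseq_rep_ex[OF vX(2)] by blast
    obtain j where v2: "v2 = replicate j False" "j \<le> y" using subseq_rep_ex[OF vv(2)] by blast
    obtain ct where c: "c = False # ct" using vd(2,3) by (cases c) auto
    have "v1 @ X = replicate p True @ c @ replicate p True" using vX(1) vd(1) by auto
    then have "replicate i True @ X = replicate p True @ False # (ct @ replicate p True)"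
      using v1 c by simp
    then have "X = replicate (p - i) True @ False # (ct @ replicate p True)"
      by (rule rep_prefix2) simp
    then have X: "X = replicate (p - i) True @ c @ replicate p True" using c by simp
    have "\<exists>c0 c'. c = c0 @ c' \<and> length c0 \<le> y \<and> (c' = [] \<or> last c' = False) \<and> subseq (c' @ replicate p True) v3"
    proof (cases "p - i")
      case (Suc u)
      have "v2 = []"
      proof (rule ccontr)
        assume "v2 \<noteq> []"
        then have "hd X = False" using vv(1) v2 by (cases j) auto
        then show False using X Suc by simp
      qed
      then have "v3 = X" using vv(1) by simp
      then have "subseq (c @ replicate p True) v3" using X by (simp add: subseq_drop_many)
      then show ?thesis using vd(4) by (intro exI[of _ "[]"] exI[of _ c]) auto
    next
      case 0
      then have "v2 @ v3 = c @ replicate p True" using X vv(1) by simp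
      then have "replicate j False @ v3 = c @ replicate p True" using v2 by simp
      then obtain c' where c': "c = replicate j False @ c'" "v3 = c' @ replicate p True"
        using rep_split p0 by blast
      have "c' = [] \<or> last c' = False" using vd(4) c'(1) by (cases "c' = []") auto
      then show ?thesis using c' v2(2) by (intro exI[of _ "replicate j False"] exI[of _ c']) auto
    qed
    then obtain c0 c' where cc: "c = c0 @ c'" "length c0 \<le> y" "c' = [] \<or> last c' = False"
      "subseq (c' @ replicate p True) v3" by blast
    have "subseq (c' @ replicate p True) (AB k @ replicate k False)"
      using cc(4) vv(3) by (rule subseq_order.order_trans)
    then have "length c' + 2*p \<le> 2*k" using Q[OF p0 cc(3)] by blast
    then show ?thesis using vd(1) cc(1,2) by simp
  qed
qed

lemma L2:
  assumes ap: "map Not (rev v) = v"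
    and sub: "subseq v (replicate x True @ replicate y False @ AB k @ replicate k False)"
    and x: "2*k+1 \<le> x"
  shows "length v \<le> 2*x"
proof -
  have "cnt False v = cnt False (map Not (rev v))" using ap by simp
  also have "\<dots> = cnt True v" by simp
  finally have len: "length v = 2 * cnt True v" using cnt_sum[of v] by simp
  obtain v1 X where vX: "v = v1 @ X" "subseq v1 (replicate x True)"
    "subseq X (replicate y False @ AB k @ replicate k False)"
    using sub by (auto elim: subseq_appendE)
  obtain v2 v3 where vv: "X = v2 @ v3" "subseq v2 (replicate y False)" "subseq v3 (AB k @ replicate k False)"
    using vX(3) by (auto elim: subseq_appendE)
  obtain i where v1: "v1 = replicate i True" "i \<le> x" using subseq_rep_ex[OF vX(2)] by blast
  obtain j where v2: "v2 = replicate j False" using subseq_rep_ex[OF vv(2)] by blast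
  have ix: "i \<le> x" using v1(2) .
  have "cnt True v = cnt True v1 + cnt True v2 + cnt True v3" using vX(1) vv(1) by simp
  then have cv: "cnt True v = i + cnt True v3" using v1(1) v2 by simp
  have "cnt True v \<le> x"
  proof (cases "True \<in> set v3")
    case False
    then show ?thesis using cv ix cnt_zero[of True v3] by simp
  next
    case T3: True
    show ?thesis
    proof (cases "i = 0")
      case True
      have "cnt True v3 \<le> k" using cnt_mono[OF vv(3), of True] by simp
      then show ?thesis using True cv x by simp
    next
      case False
      have "rev v = rev X @ replicate i True" using vX(1) v1(1) by simp
      then have "map Not (rev v) = map Not (rev X) @ replicate i False" by simp
      then have e2: "v = map Not (rev X) @ replicate i False" using ap by simp
      have e1: "(v1 @ v2) @ v3 = v" using vX(1) vv(1) by simp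
      from e1 e2 have eq: "(v1 @ v2) @ v3 = map Not (rev X) @ replicate i False" by (rule trans)
      obtain us where "(v1 @ v2 = map Not (rev X) @ us \<and> us @ v3 = replicate i False) \<or>
                       ((v1 @ v2) @ us = map Not (rev X) \<and> v3 = us @ replicate i False)"
        using iffD1[OF append_eq_append_conv2 eq] by blast
      then have "\<exists>q. v3 = q @ replicate i False"
      proof
        assume "v1 @ v2 = map Not (rev X) @ us \<and> us @ v3 = replicate i False"
        then have H: "us @ v3 = replicate i False" by blast
        have "set v3 \<subseteq> set (us @ v3)" by simp
        also have "\<dots> = set (replicate i False)" using H by simp
        also have "\<dots> \<subseteq> {False}" by auto
        finally have "set v3 \<subseteq> {False}" .
        then show ?thesis using T3 by auto
      qed auto
      then obtain q where q: "v3 = q @ replicate i False" by blast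
      then have "True \<in> set q" using T3 by auto
      then obtain q'' r where q'': "q = q'' @ replicate r False" "q'' \<noteq> []" "last q'' = True"
        using LASTT by blast
      have "v3 = q'' @ replicate (r + i) False" using q q'' by (simp add: replicate_add)
      then have "cnt True q'' + (r + i) \<le> k + k + 1" using PR[OF q''(2,3)] vv(3) by auto
      moreover have "cnt True v3 = cnt True q''" using q q'' by simp
      ultimately show ?thesis using cv x by simp
    qed
  qed
  then show ?thesis using len by simp
qed

lemma Sd_word_lower:
  assumes "\<And>v. subseq v w \<Longrightarrow> (is_palindrome v \<or> is_antipalindrome v) \<Longrightarrow> length v \<le> L"
  shows "length w - L \<le> Sd_word w"
proof -
  let ?P = "\<lambda>k. \<exists>v. subseq v w \<and> length v + k = length w \<and> (is_palindrome v \<or> is_antipalindrome v)"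
  have "?P (length w)" by (rule exI[of _ "[]"]) (simp add: is_palindrome_def)
  then have "?P (Least ?P)" by (rule LeastI)
  then obtain v where "subseq v w" "length v + Sd_word w = length w" "is_palindrome v \<or> is_antipalindrome v"
    unfolding Sd_word_def by blast
  then show ?thesis using assms by fastforce
qed

lemma Sd_word_upper: "Sd_word w \<le> length w div 2"
proof -
  have "length w \<le> 2 * cnt True w \<or> length w \<le> 2 * cnt False w" using cnt_sum[of w] by linarith
  then obtain e where e: "length w \<le> 2 * cnt e w" by blast
  let ?v = "filter (\<lambda>z. z = e) w"
  have "\<forall>z\<in>set ?v. z = e" by simp
  then have v: "?v = replicate (cnt e w) e" unfolding cnt_def by (rule replicate_length_same[symmetric])
  have pal: "is_palindrome ?v" unfolding pal_iff v by simp
  have "Sd_word w \<le> length w - cnt e w" unfolding Sd_word_def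
  proof (rule Least_le)
    show "\<exists>v. subseq v w \<and> length v + (length w - cnt e w) = length w \<and> (is_palindrome v \<or> is_antipalindrome v)"
      using pal by (intro exI[of _ ?v]) (auto simp: cnt_def length_filter_le)
  qed
  then show ?thesis using e by linarith
qed

lemma fin_words: "finite {w :: bool list. length w = n}"
  using finite_lists_length_eq[of "UNIV :: bool set" n] by simp

lemma Sd_ge: "length w = n \<Longrightarrow> Sd_word w \<le> Sd n"
  unfolding Sd_def by (rule Max_ge) (use fin_words in auto)

lemma Sd_le: "Sd n \<le> n div 2"
proof -
  have ne: "{w :: bool list. length w = n} \<noteq> {}" by (auto intro: exI[of _ "replicate n True"])
  show ?thesis unfolding Sd_def
  proof (subst Max_le_iff)
    show "finite (Sd_word ` {w. length w = n})" using fin_words[of n] by simp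
    show "Sd_word ` {w. length w = n} \<noteq> {}" using ne by simp
    show "\<forall>a\<in>Sd_word ` {w. length w = n}. a \<le> n div 2"
    proof
      fix a assume "a \<in> Sd_word ` {w. length w = n}"
      then obtain w where "length w = n" "a = Sd_word w" by blast
      then show "a \<le> n div 2" using Sd_word_upper[of w] by simp
    qed
  qed
qed

lemma lower_gen:
  assumes n: "n = x + y + 3*k" and y: "2*k+1 \<le> y" and xy: "x \<le> y+k" and x: "2*k+1 \<le> x"
  shows "n - max (y+2*k) (2*x) \<le> Sd n"
proof -
  let ?w = "replicate x True @ replicate y False @ AB k @ replicate k False"
  have len: "length ?w = n" using n by simp
  have "length ?w - max (y+2*k) (2*x) \<le> Sd_word ?w"
  proof (rule Sd_word_lower)
    fix v assume sv: "subseq v ?w" and pv: "is_palindrome v \<or> is_antipalindrome v"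
    show "length v \<le> max (y+2*k) (2*x)"
      using pv
    proof
      assume "is_palindrome v"
      then have "length v \<le> y + 2*k" using L1[OF _ sv y xy] pal_iff by blast
      then show ?thesis by simp
    next
      assume "is_antipalindrome v"
      then have "length v \<le> 2*x" using L2[OF _ sv x] antipal_iff by blast
      then show ?thesis by simp
    qed
  qed
  then show ?thesis using Sd_ge[OF len] len by simp
qed

theorem theorem1:
  fixes n :: nat
  assumes "n \<ge> 2"
  shows "floor ((real n + 2 * real_of_int (floor ((real n - 3) / 7))) / 3) \<le> int (Sd n)
       \<and> Sd n \<le> n div 2"
proof -
  have M: "floor ((real n - 3) / 7) = (int n - 3) div 7"
  proof -
    have "floor ((real n - 3) / 7) = floor (real_of_int (int n - 3) / real_of_int 7)" by simp
    also have "\<dots> = (int n - 3) div 7" by (rule floor_divide_of_int_eq)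
    finally show ?thesis .
  qed
  have F: "floor ((real n + 2 * real_of_int ((int n - 3) div 7)) / 3) = (int n + 2 * ((int n - 3) div 7)) div 3"
  proof -
    have "floor ((real n + 2 * real_of_int ((int n - 3) div 7)) / 3)
        = floor (real_of_int (int n + 2 * ((int n - 3) div 7)) / real_of_int 3)" by simp
    also have "\<dots> = (int n + 2 * ((int n - 3) div 7)) div 3" by (rule floor_divide_of_int_eq)
    finally show ?thesis .
  qed
  have low: "(int n + 2 * ((int n - 3) div 7)) div 3 \<le> int (Sd n)"
  proof (cases "n = 2")
    case True then show ?thesis by simp
  next
    case False
    define m where "m = (n - 3) div 7"
    define r where "r = (n - 3) mod 7"
    have nm: "n = 7*m + 3 + r" "r < 7" using False assms unfolding m_def r_def by auto
    have dm: "(int n - 3) div 7 = int m" using nm by simp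
    have "r < 3 \<or> (3 \<le> r \<and> r < 6) \<or> r = 6" using nm by auto
    then have "(int n + 2 * int m) div 3 \<le> int (Sd n)"
    proof (elim disjE conjE)
      assume r: "r < 3"
      have "n - max ((2*m+2+r)+2*m) (2*(2*m+1)) \<le> Sd n"
        by (rule lower_gen) (use nm r in auto)
      then show ?thesis using nm r by (simp add: max_def split: if_splits; presburger)
    next
      assume r: "3 \<le> r" "r < 6"
      have "n - max ((2*m+1+r)+2*m) (2*(2*m+2)) \<le> Sd n"
        by (rule lower_gen) (use nm r in auto)
      then show ?thesis using nm r by (simp add: max_def split: if_splits; presburger)
    next
      assume r: "r = 6"
      have "n - max ((2*m+6)+2*m) (2*(2*m+3)) \<le> Sd n"
        by (rule lower_gen) (use nm r in auto)
      then show ?thesis using nm r by (simp add: max_def split: if_splits; presburger)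
    qed
    then show ?thesis using dm by simp
  qed
  show ?thesis using M F low Sd_le by simp
qed

end
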